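(* Let $k\ge 4$ and let $G=(V,E)$ be the cycle graph of the cycle $C=(v_0,\ldots,v_{k-1})$, i.e. $V=V(C)$ and $E=\textnormal{ext}(C)$, with vertex indices taken modulo $k$. For every $i$, the inequality $$x_{\{v_{i-1},v_{i+1}\}}+\sum_{\substack{f\in E^c:\ v_i\in f,\\ f\cap\{v_{i-1},v_{i+1}\}=\emptyset}}x_f\ \ge\ 1$$ is valid and facet-defining for $\textnormal{conv}(X(G))$.
   Context: $\textnormal{ext}(C)=\{\{v_{i-1},v_i\}\}_{i=1}^{k-1}\cup\{\{v_{k-1},v_0\}\}$, $\textnormal{int}(C)=\binom{V(C)}{2}\setminus\textnormal{ext}(C)$, $E^c=\binom{V}{2}\setminus E=\textnormal{int}(C)$. For $x\in\{0,1\}^{E^c}$, $E(x)=\{f:x_f=1\}$ and $X(G)=\{x\in\{0,1\}^{E^c}:(V,E\cup E(x))\text{ is chordal}\}$; a graph is chordal if every cycle with at least four vertices has a chord. *)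

theory Defs
  imports "HOL-Analysis.Analysis"
begin

text \<open>Cycle C = (v_0,...,v_{k-1}) with v_i represented by the natural number i < k.
  Edges (and non-edges) are 2-element sets of vertices.\<close>

definition two_subsets :: "nat set \<Rightarrow> nat set set" where
  "two_subsets V = {e. \<exists>a b. a \<in> V \<and> b \<in> V \<and> a \<noteq> b \<and> e = {a, b}}"

definition cyc_ext :: "nat \<Rightarrow> nat set set" where
  "cyc_ext k = {{i, (i + 1) mod k} | i. i < k}"

definition cyc_Ec :: "nat \<Rightarrow> nat set set" where
  "cyc_Ec k = two_subsets {0..<k} - cyc_ext k"

definition chordal :: "nat set \<Rightarrow> nat set set \<Rightarrow> bool" where
  "chordal V F \<longleftrightarrow>
     (\<forall>vs. distinct vs \<and> set vs \<subseteq> V \<and> length vs \<ge> 4 \<and>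
        (\<forall>i < length vs. {vs ! i, vs ! ((i + 1) mod length vs)} \<in> F)
      \<longrightarrow> (\<exists>i j. i < length vs \<and> j < length vs \<and> i \<noteq> j \<and>
             j \<noteq> (i + 1) mod length vs \<and> i \<noteq> (j + 1) mod length vs \<and>
             {vs ! i, vs ! j} \<in> F))"

text \<open>R^{E^c} is represented as the type real ^ 'e via a bijection idx from the finite
  index type 'e onto E^c. X(G) is the set of 0/1 vectors x with (V, E \<union> E(x)) chordal.\<close>

definition XG :: "nat \<Rightarrow> ('e::finite \<Rightarrow> nat set) \<Rightarrow> (real ^ 'e) set" where
  "XG k idx = {x. (\<forall>e. x $ e = 0 \<or> x $ e = 1) \<and>
                  chordal {0..<k} (cyc_ext k \<union> {idx e | e. x $ e = 1})}"

definition ineq_lhs :: "nat \<Rightarrow> ('e::finite \<Rightarrow> nat set) \<Rightarrow> nat \<Rightarrow> real ^ 'e \<Rightarrow> real" where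
  "ineq_lhs k idx i x =
     (let p = (i + k - 1) mod k; n = (i + 1) mod k in
      (\<Sum>e \<in> {e. idx e = {p, n}}. x $ e) +
      (\<Sum>e \<in> {e. i \<in> idx e \<and> idx e \<inter> {p, n} = {}}. x $ e))"

end

theory Submission
  imports Defs
begin

lemma chordal_PEO:
  assumes H: "\<And>W. W \<subseteq> V \<Longrightarrow> card W \<ge> 4 \<Longrightarrow> \<exists>v\<in>W. \<forall>a\<in>W. \<forall>b\<in>W. a\<noteq>v \<longrightarrow> b\<noteq>v \<longrightarrow> a\<noteq>b \<longrightarrow> {v,a}\<in>F \<longrightarrow> {v,b}\<in>F \<longrightarrow> {a,b}\<in>F"
  shows "chordal V F"
  unfolding chordal_def
proof (intro allI impI)
  fix vs :: "nat list"
  assume A: "distinct vs \<and> set vs \<subseteq> V \<and> length vs \<ge> 4 \<and>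
        (\<forall>i < length vs. {vs ! i, vs ! ((i + 1) mod length vs)} \<in> F)"
  define L where "L = length vs"
  have L4: "L \<ge> 4" using A L_def by simp
  have "card (set vs) \<ge> 4" using A distinct_card by metis
  then obtain v where vW: "v \<in> set vs" and sv: "\<forall>a\<in>set vs. \<forall>b\<in>set vs. a\<noteq>v \<longrightarrow> b\<noteq>v \<longrightarrow> a\<noteq>b \<longrightarrow> {v,a}\<in>F \<longrightarrow> {v,b}\<in>F \<longrightarrow> {a,b}\<in>F"
    using H A by blast
  then obtain m where m: "m < L" "vs ! m = v" using L_def by (metis in_set_conv_nth)
  define i where "i = (m+1) mod L"
  define j where "j = (m+L-1) mod L"
  have i: "i < L" "j < L" using L4 by (auto simp: i_def j_def)
  have ji: "(j + 1) mod L = m" using m L4 unfolding j_def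
    by (metis Nat.add_diff_assoc2 add.commute add_diff_cancel_left' le_add2 le_trans mod_add_left_eq mod_add_self2 mod_less one_le_numeral)
  have neq: "i \<noteq> m" "j \<noteq> m" "i \<noteq> j" "j \<noteq> (i+1) mod L"
    using m L4 unfolding i_def j_def
    by (auto simp: mod_if split: if_splits)
  have e1: "{v, vs!i} \<in> F" using A m i_def L_def by auto
  have e2: "{v, vs!j} \<in> F" using A m i ji L_def by (metis insert_commute)
  have d: "vs!i \<noteq> v" "vs!j \<noteq> v" "vs!i \<noteq> vs!j"
    using A neq m i L_def by (auto simp: nth_eq_iff_index_eq)
  have "{vs!i, vs!j} \<in> F" using sv e1 e2 d i L_def by auto
  then show "\<exists>i j. i < length vs \<and> j < length vs \<and> i \<noteq> j \<and>
             j \<noteq> (i + 1) mod length vs \<and> i \<noteq> (j + 1) mod length vs \<and>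
             {vs ! i, vs ! j} \<in> F"
    using i neq ji L_def by (intro exI[of _ i] exI[of _ j]) auto
qed

lemma short_cycle:
  assumes ch: "chordal V F" and np: "{n,p} \<notin> F" and nb: "\<And>w. {i,w} \<in> F \<Longrightarrow> w = p \<or> w = n \<or> w = i"
  shows "length vs = L \<Longrightarrow> distinct vs \<Longrightarrow> set vs \<subseteq> V \<Longrightarrow> L \<ge> 4 \<Longrightarrow>
    (\<forall>t<L. {vs!t, vs!((t+1) mod L)} \<in> F) \<Longrightarrow> vs!0 = i \<Longrightarrow> vs!1 = n \<Longrightarrow> vs!(L-1) = p \<Longrightarrow> False"
proof (induction L arbitrary: vs rule: less_induct)
  case (less L)
  note hyp = less.prems
  obtain u w where uw: "u < L" "w < L" "u \<noteq> w" "w \<noteq> (u + 1) mod L" "u \<noteq> (w + 1) mod L"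
    "{vs ! u, vs ! w} \<in> F"
    using ch hyp unfolding chordal_def by blast
  define a where "a = min u w"
  define b where "b = max u w"
  have ab: "a < b" "b < L" "b \<noteq> a+1" "\<not> (a = 0 \<and> b = L-1)" "{vs!a, vs!b} \<in> F"
    using uw hyp(4) unfolding a_def b_def
    by (auto simp: min_def max_def insert_commute mod_if split: if_splits)
  have dist: "\<And>x y. x < L \<Longrightarrow> y < L \<Longrightarrow> vs!x = vs!y \<longleftrightarrow> x = y"
    using hyp by (simp add: nth_eq_iff_index_eq)
  have a1: "a \<ge> 1"
  proof (rule ccontr)
    assume "\<not> a \<ge> 1"
    then have "a = 0" by simp
    then have "{i, vs!b} \<in> F" using ab hyp by simp
    then have "vs!b = vs!(L-1) \<or> vs!b = vs!1 \<or> vs!b = vs!0" using nb hyp by auto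
    then have "b = L-1 \<or> b = 1 \<or> b = 0" using dist ab hyp(4) by auto
    then show False using ab \<open>a = 0\<close> by auto
  qed
  show False
  proof (cases "a = 1 \<and> b = L-1")
    case True
    then show ?thesis using ab np hyp by (simp add: insert_commute)
  next
    case False
    define vs' where "vs' = take (a+1) vs @ drop b vs"
    define L' where "L' = a + 1 + L - b"
    have lenL': "length vs' = L'" using ab hyp unfolding vs'_def L'_def by auto
    have L'4: "L' \<ge> 4" "L' < L" using ab a1 False unfolding L'_def by auto
    have nth': "\<And>t. t < L' \<Longrightarrow> vs'!t = vs!(if t \<le> a then t else t + b - a - 1)"
    proof -
      fix t assume "t < L'"
      moreover have "b + t - Suc a = t + b - a - 1" by simp
      ultimately show "vs'!t = vs!(if t \<le> a then t else t + b - a - 1)"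
        using ab hyp unfolding vs'_def L'_def by (auto simp: nth_append)
    qed
    have dv: "distinct vs'" unfolding vs'_def
      using hyp ab set_take_disj_set_drop_if_distinct[of vs "a+1" b] by simp
    have sv: "set vs' \<subseteq> V" unfolding vs'_def using hyp
      using set_take_subset[of "a+1" vs] set_drop_subset[of b vs] by auto
    have cyc: "\<forall>t<L'. {vs'!t, vs'!((t+1) mod L')} \<in> F"
    proof (intro allI impI)
      fix t assume t: "t < L'"
      consider "t < a" | "t = a" | "a < t \<and> t < L' - 1" | "t = L' - 1" using t by linarith
      then show "{vs'!t, vs'!((t+1) mod L')} \<in> F"
      proof cases
        case 1
        then have "t < L" using ab by simp
        then have "{vs!t, vs!((t+1) mod L)} \<in> F" using hyp(5) by blast
        moreover have "(t+1) mod L' = t+1" "(t+1) mod L = t+1" using 1 ab L'_def by auto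
        moreover have "vs'!t = vs!t" "vs'!(t+1) = vs!(t+1)" using nth'[of t] nth'[of "t+1"] 1 ab L'_def by auto
        ultimately show ?thesis by simp
      next
        case 2
        moreover have "(t+1) mod L' = a+1" using 2 ab L'_def by auto
        moreover have "vs'!a = vs!a" "vs'!(a+1) = vs!b" using nth'[of a] nth'[of "a+1"] ab L'_def by auto
        ultimately show ?thesis using ab by simp
      next
        case 3
        then have "t + b - a - 1 < L" using ab L'_def by auto
        then have "{vs!(t + b - a - 1), vs!((t + b - a - 1 + 1) mod L)} \<in> F" using hyp(5) by blast
        moreover have "(t + b - a - 1 + 1) mod L = t + 1 + b - a - 1" using 3 ab L'_def by auto
        moreover have "(t+1) mod L' = t+1" using 3 by auto
        moreover have "vs'!t = vs!(t + b - a - 1)" "vs'!(t+1) = vs!(t + 1 + b - a - 1)"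
          using nth'[of t] nth'[of "t+1"] 3 ab L'_def by auto
        ultimately show ?thesis by simp
      next
        case 4
        have "L - 1 < L" using ab by simp
        then have "{vs!(L-1), vs!((L - 1 + 1) mod L)} \<in> F" using hyp(5) by blast
        moreover have "(L - 1 + 1) mod L = 0" using ab by auto
        moreover have "vs'!t = vs!(L-1)" using 4 nth'[of t] t ab L'_def by auto
        moreover have "(t+1) mod L' = 0" using 4 L'4 by auto
        moreover have "vs'!0 = vs!0" using nth'[of 0] L'4 by auto
        ultimately show ?thesis by simp
      qed
    qed
    have "vs'!0 = i" "vs'!1 = n" "vs'!(L'-1) = p"
      using nth' L'4 hyp a1 ab by (auto simp: L'_def)
    then show False using less.IH[OF L'4(2) lenL' dv sv L'4(1) cyc] by auto
  qed
qed

lemma mod_succ: "(a::nat) < k \<Longrightarrow> (a+1) mod k = (if a+1 = k then 0 else a+1)"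
proof -
  assume a: "a < k"
  show ?thesis
  proof (cases "a+1 = k")
    case True then show ?thesis by simp
  next
    case False then show ?thesis using a by simp
  qed
qed

lemma mod_pred: "(i::nat) < k \<Longrightarrow> (i+k-1) mod k = (if i = 0 then k-1 else i-1)"
proof -
  assume "i < k"
  show ?thesis
  proof (cases "i = 0")
    case True then have "i + k - 1 = k - 1" by simp
    then show ?thesis using True \<open>i<k\<close> by simp
  next
    case False
    then have eq: "i + k - 1 = (i - 1) + k" by auto
    have "(i - 1 + k) mod k = i - 1" using \<open>i<k\<close> by simp
    then show ?thesis using False eq by metis
  qed
qed

lemma cyc_ext_iff:
  fixes a b k :: nat
  assumes "0 < k"
  shows "{a,b} \<in> cyc_ext k \<longleftrightarrow> a < k \<and> b < k \<and> (b = (a+1) mod k \<or> a = (b+1) mod k)"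
proof
  assume "{a,b} \<in> cyc_ext k"
  then obtain j where j: "j < k" "{a,b} = {j, (j+1) mod k}" unfolding cyc_ext_def by auto
  then show "a < k \<and> b < k \<and> (b = (a+1) mod k \<or> a = (b+1) mod k)"
    using assms by (auto simp: doubleton_eq_iff)
next
  assume "a < k \<and> b < k \<and> (b = (a+1) mod k \<or> a = (b+1) mod k)"
  then show "{a,b} \<in> cyc_ext k" unfolding cyc_ext_def
    by (auto simp: doubleton_eq_iff insert_commute)
qed

lemma cyc_ext_elem: "e \<in> cyc_ext k \<Longrightarrow> \<exists>a b. e = {a,b}"
  unfolding cyc_ext_def by auto

lemma two_subsets_iff: "{a,b} \<in> two_subsets V \<longleftrightarrow> a \<in> V \<and> b \<in> V \<and> a \<noteq> b"
  unfolding two_subsets_def by (auto simp: doubleton_eq_iff)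

lemma cyc_Ec_elem: "e \<in> cyc_Ec k \<Longrightarrow> \<exists>a b. e = {a,b} \<and> a < k \<and> b < k \<and> a \<noteq> b"
  unfolding cyc_Ec_def two_subsets_def by auto

lemma pair_cases: "(a::nat) < k \<Longrightarrow> b < k \<Longrightarrow> a \<noteq> b \<Longrightarrow> {a,b} \<in> cyc_ext k \<or> {a,b} \<in> cyc_Ec k"
  unfolding cyc_Ec_def using two_subsets_iff by auto

lemma pn_facts:
  fixes k i :: nat
  assumes k: "k \<ge> 4" and i: "i < k"
  defines "p \<equiv> (i+k-1) mod k" and "n \<equiv> (i+1) mod k"
  shows "p < k" "n < k" "p \<noteq> n" "p \<noteq> i" "n \<noteq> i" "{p,n} \<in> cyc_Ec k"
    "{i,p} \<in> cyc_ext k" "{i,n} \<in> cyc_ext k"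
    "\<And>w. {i,w} \<in> cyc_ext k \<Longrightarrow> w = p \<or> w = n"
proof -
  have P: "p = (if i = 0 then k-1 else i-1)" using mod_pred[OF i] p_def by simp
  have N: "n = (if i+1 = k then 0 else i+1)" using mod_succ[OF i] n_def by simp
  show pk: "p < k" "n < k" "p \<noteq> n" "p \<noteq> i" "n \<noteq> i" using P N k i by auto
  have k0: "0 < k" using k by simp
  have "\<not> {p,n} \<in> cyc_ext k"
    unfolding cyc_ext_iff[OF k0] using P N k i by (auto simp: mod_if)
  then show "{p,n} \<in> cyc_Ec k" using pair_cases[of p k n] pk by auto
  show "{i,p} \<in> cyc_ext k" "{i,n} \<in> cyc_ext k"
    unfolding cyc_ext_iff[OF k0] using P N k i by (auto simp: mod_if)
  show "\<And>w. {i,w} \<in> cyc_ext k \<Longrightarrow> w = p \<or> w = n"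
    unfolding cyc_ext_iff[OF k0] using P N k i by (auto simp: mod_if split: if_splits)
qed

definition Fx :: "nat \<Rightarrow> ('e::finite \<Rightarrow> nat set) \<Rightarrow> real ^ 'e \<Rightarrow> nat set set" where
  "Fx k idx x = cyc_ext k \<union> {idx e | e. x $ e = 1}"

locale cycset =
  fixes k i :: nat and idx :: "'e::finite \<Rightarrow> nat set"
  assumes k4: "k \<ge> 4" and bij: "bij_betw idx UNIV (cyc_Ec k)" and ik: "i < k"
begin

definition "p = (i+k-1) mod k"
definition "n = (i+1) mod k"

lemmas pn = pn_facts[OF k4 ik, folded p_def n_def]

lemma inj_idx: "idx e = idx e' \<Longrightarrow> e = e'"
  using bij_betw_imp_inj_on[OF bij] by (auto dest: injD)

lemma range_idx: "range idx = cyc_Ec k"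
  using bij_betw_imp_surj_on[OF bij] .

lemma idx_Ec: "idx e \<in> cyc_Ec k" using range_idx by auto

lemma Ec_pre: "E \<in> cyc_Ec k \<Longrightarrow> \<exists>e. idx e = E"
  using range_idx by (metis imageE)

definition "ea = (SOME e. idx e = {p,n})"

lemma idx_ea: "idx ea = {p,n}"
  unfolding ea_def using Ec_pre[OF pn(6)] by (rule someI_ex)

definition "S = {e. i \<in> idx e \<and> idx e \<inter> {p,n} = {}}"

lemma ea_notS: "ea \<notin> S" using idx_ea pn unfolding S_def by auto

lemma lhs_eq: "ineq_lhs k idx i x = x $ ea + sum (\<lambda>e. x $ e) S"
proof -
  have "{e. idx e = {p,n}} = {ea}" using idx_ea inj_idx by auto
  then show ?thesis unfolding ineq_lhs_def Let_def p_def[symmetric] n_def[symmetric] S_def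
    by simp
qed

lemma Ext_Ec_disj: "E \<in> cyc_ext k \<Longrightarrow> E \<in> cyc_Ec k \<Longrightarrow> False"
  unfolding cyc_Ec_def by auto

lemma inF:
  assumes "a < k" "b < k" "a \<noteq> b" "\<And>e. idx e = {a,b} \<Longrightarrow> x $ e = 1"
  shows "{a,b} \<in> Fx k idx x"
proof -
  consider "{a,b} \<in> cyc_ext k" | "{a,b} \<in> cyc_Ec k" using pair_cases assms by blast
  then show ?thesis
  proof cases
    case 1 then show ?thesis unfolding Fx_def by simp
  next
    case 2
    then obtain e where "idx e = {a,b}" using Ec_pre by blast
    then show ?thesis using assms(4) unfolding Fx_def by force
  qed
qed

lemma Fdest: "E \<in> Fx k idx x \<Longrightarrow> E \<in> cyc_ext k \<or> (\<exists>e. idx e = E \<and> x $ e = 1)"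
  unfolding Fx_def by auto

lemma nbr_i:
  assumes "\<forall>e\<in>S. x $ e \<noteq> 1" "{i,w} \<in> Fx k idx x"
  shows "w = p \<or> w = n \<or> w = i"
proof -
  consider "{i,w} \<in> cyc_ext k" | e where "idx e = {i,w}" "x $ e = 1" using Fdest[OF assms(2)] by blast
  then show ?thesis
  proof cases
    case 1 then show ?thesis using pn(9) by blast
  next
    case 2
    then have "e \<notin> S" using assms(1) by auto
    then have "{i,w} \<inter> {p,n} \<noteq> {}" using 2 unfolding S_def by auto
    then show ?thesis using pn by auto
  qed
qed

lemma valid01:
  assumes x: "x \<in> XG k idx"
  shows "x $ ea = 1 \<or> (\<exists>s\<in>S. x $ s = 1)"
proof (rule ccontr)
  assume A: "\<not> (x $ ea = 1 \<or> (\<exists>s\<in>S. x $ s = 1))"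
  have ch: "chordal {0..<k} (Fx k idx x)" using x unfolding XG_def Fx_def by auto
  have np: "{n,p} \<notin> Fx k idx x"
  proof
    assume "{n,p} \<in> Fx k idx x"
    then consider "{n,p} \<in> cyc_ext k" | e where "idx e = {n,p}" "x $ e = 1" using Fdest by blast
    then show False
    proof cases
      case 1 then show ?thesis using pn(6) Ext_Ec_disj by (metis insert_commute)
    next
      case 2
      then have "e = ea" using idx_ea inj_idx by (metis insert_commute)
      then show ?thesis using A 2 by simp
    qed
  qed
  have nb: "\<And>w. {i,w} \<in> Fx k idx x \<Longrightarrow> w = p \<or> w = n \<or> w = i"
    using nbr_i A by blast
  define vs where "vs = map (\<lambda>t. (i+t) mod k) [0..<k]"
  have k0: "0 < k" using k4 by simp
  have len: "length vs = k" unfolding vs_def by simp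
  have dist: "distinct vs" unfolding vs_def distinct_map
  proof
    show "inj_on (\<lambda>t. (i + t) mod k) (set [0..<k])"
    proof (rule inj_onI)
      fix t t' assume t: "t \<in> set [0..<k]" "t' \<in> set [0..<k]" "(i + t) mod k = (i + t') mod k"
      show "t = t'"
      proof (rule ccontr)
        assume ne: "t \<noteq> t'"
        { fix u v :: nat assume uv: "u < v" "v < k" "(i + u) mod k = (i + v) mod k"
          then have "k dvd (i + v) - (i + u)" using mod_eq_dvd_iff_nat[of "i+u" "i+v" k] by auto
          then have "k dvd v - u" by simp
          then have False using uv by (metis dvd_imp_le diff_le_self le_trans not_less zero_less_diff) }
        then show False using t ne by (metis atLeastLessThan_iff linorder_neqE_nat set_upt)
      qed
    qed
  qed simp
  have set: "set vs \<subseteq> {0..<k}" unfolding vs_def using k0 by auto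
  have cyc: "\<forall>t<k. {vs!t, vs!((t+1) mod k)} \<in> Fx k idx x"
  proof (intro allI impI)
    fix t assume t: "t < k"
    have "{(i+t) mod k, (i + (t+1) mod k) mod k} \<in> cyc_ext k"
      unfolding cyc_ext_iff[OF k0] using k0 by (simp add: mod_simps)
    then show "{vs!t, vs!((t+1) mod k)} \<in> Fx k idx x"
      unfolding vs_def Fx_def using t k0 by simp
  qed
  have "vs!0 = i" "vs!1 = n" "vs!(k-1) = p"
    unfolding vs_def n_def p_def using k4 ik by auto
  then show False
    using short_cycle[OF ch np nb len dist set k4] cyc by blast
qed

end

lemma nc:
  assumes "finite W" "card W \<ge> 3"
    "\<forall>a\<in>W. \<forall>b\<in>W. a\<noteq>b \<longrightarrow> {a,b} = {r1,r2} \<or> {a,b}\<in>F"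
  shows "\<exists>v\<in>W. \<forall>a\<in>W. \<forall>b\<in>W. a\<noteq>v \<longrightarrow> b\<noteq>v \<longrightarrow> a\<noteq>b \<longrightarrow> {v,a}\<in>F \<longrightarrow> {v,b}\<in>F \<longrightarrow> {a,b}\<in>F"
proof (cases "r1 \<in> W")
  case True
  show ?thesis
  proof (rule bexI[OF _ True], intro ballI impI)
    fix a b assume "a \<in> W" "b \<in> W" "a \<noteq> r1" "b \<noteq> r1" "a \<noteq> b"
    then show "{a,b} \<in> F" using assms(3) by (auto simp: doubleton_eq_iff)
  qed
next
  case False
  have "W \<noteq> {}" using assms by auto
  then obtain v where v: "v \<in> W" by blast
  show ?thesis
  proof (rule bexI[OF _ v], intro ballI impI)
    fix a b assume "a \<in> W" "b \<in> W" "a \<noteq> b"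
    then show "{a,b} \<in> F" using assms(3) False by (auto simp: doubleton_eq_iff)
  qed
qed

context cycset begin

lemma chordal_y:
  assumes "\<forall>e\<in>S. x$e = 0" "x$ea = 1" "\<forall>e. e\<notin>S \<longrightarrow> idx e \<noteq> {r1,r2} \<longrightarrow> x$e = 1"
  shows "chordal {0..<k} (Fx k idx x)"
proof (rule chordal_PEO)
  fix W assume W: "W \<subseteq> {0..<k}" "card W \<ge> 4"
  have fW: "finite W" using W finite_subset by blast
  show "\<exists>v\<in>W. \<forall>a\<in>W. \<forall>b\<in>W. a\<noteq>v \<longrightarrow> b\<noteq>v \<longrightarrow> a\<noteq>b \<longrightarrow> {v,a}\<in>Fx k idx x \<longrightarrow> {v,b}\<in>Fx k idx x \<longrightarrow> {a,b}\<in>Fx k idx x"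
  proof (cases "i \<in> W")
    case True
    show ?thesis
    proof (rule bexI[OF _ True], intro ballI impI)
      fix a b assume ab: "a \<in> W" "b \<in> W" "a \<noteq> i" "b \<noteq> i" "a \<noteq> b" "{i,a}\<in>Fx k idx x" "{i,b}\<in>Fx k idx x"
      have "\<forall>e\<in>S. x $ e \<noteq> 1" using assms(1) by simp
      then have "a = p \<or> a = n" "b = p \<or> b = n" using nbr_i ab by blast+
      then have "{a,b} = {p,n}" using ab by auto
      moreover have "\<And>e. idx e = {p,n} \<Longrightarrow> x $ e = 1"
      proof -
        fix e assume "idx e = {p,n}"
        then have "e = ea" using idx_ea inj_idx by metis
        then show "x $ e = 1" using assms(2) by simp
      qed
      then have "{p,n} \<in> Fx k idx x"
        using inF[of p n x] pn by auto
      ultimately show "{a,b} \<in> Fx k idx x" by simp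
    qed
  next
    case False
    have "\<forall>a\<in>W. \<forall>b\<in>W. a\<noteq>b \<longrightarrow> {a,b} = {r1,r2} \<or> {a,b}\<in>Fx k idx x"
    proof (intro ballI impI)
      fix a b assume ab: "a \<in> W" "b \<in> W" "a \<noteq> b"
      show "{a,b} = {r1,r2} \<or> {a,b}\<in>Fx k idx x"
      proof (cases "{a,b} = {r1,r2}")
        case False2: False
        have "\<And>e. idx e = {a,b} \<Longrightarrow> x $ e = 1"
        proof -
          fix e assume e: "idx e = {a,b}"
          then have "e \<notin> S" using False ab unfolding S_def by auto
          then show "x $ e = 1" using assms(3) e False2 by auto
        qed
        moreover have "a < k" "b < k" using ab W by auto
      ultimately show ?thesis using inF[of a b x] ab by auto
      qed simp
    qed
    then show ?thesis using nc[OF fW] W by auto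
  qed
qed

lemma chordal_full:
  assumes "\<forall>e. idx e \<noteq> {r1,r2} \<longrightarrow> x$e = 1"
  shows "chordal {0..<k} (Fx k idx x)"
proof (rule chordal_PEO)
  fix W assume W: "W \<subseteq> {0..<k}" "card W \<ge> 4"
  have fW: "finite W" using W finite_subset by blast
  have "\<forall>a\<in>W. \<forall>b\<in>W. a\<noteq>b \<longrightarrow> {a,b} = {r1,r2} \<or> {a,b}\<in>Fx k idx x"
  proof (intro ballI impI)
    fix a b assume ab: "a \<in> W" "b \<in> W" "a \<noteq> b"
    show "{a,b} = {r1,r2} \<or> {a,b}\<in>Fx k idx x"
    proof (cases "{a,b} = {r1,r2}")
      case False
      then have "\<And>e. idx e = {a,b} \<Longrightarrow> x $ e = 1" using assms by auto
      moreover have "a < k" "b < k" using ab W by auto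
      ultimately show ?thesis using inF[of a b x] ab by auto
    qed simp
  qed
  then show "\<exists>v\<in>W. \<forall>a\<in>W. \<forall>b\<in>W. a\<noteq>v \<longrightarrow> b\<noteq>v \<longrightarrow> a\<noteq>b \<longrightarrow> {v,a}\<in>Fx k idx x \<longrightarrow> {v,b}\<in>Fx k idx x \<longrightarrow> {a,b}\<in>Fx k idx x"
    using nc[OF fW] W by auto
qed

lemma chordal_fan:
  assumes j: "j < k" and x: "\<And>e. x $ e = 1 \<longleftrightarrow> j \<in> idx e"
  shows "chordal {0..<k} (Fx k idx x)"
proof (rule chordal_PEO)
  fix W assume W: "W \<subseteq> {0..<k}" "card W \<ge> 4"
  have fW: "finite W" using W finite_subset by blast
  define W' where "W' = W - {j}"
  have fW': "finite W'" using fW W'_def by simp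
  have "card W - card {j} \<le> card W'" unfolding W'_def by (rule diff_card_le_card_Diff) simp
  then have "card W' \<ge> 3" using W by simp
  then have W'ne: "W' \<noteq> {}" by auto
  have k0: "0 < k" using k4 by simp
  obtain v where v: "v \<in> W'" and key: "\<And>u. u \<in> W' \<Longrightarrow> {v,u} \<in> cyc_ext k \<Longrightarrow> u = (v+1) mod k"
  proof (cases "\<exists>w\<in>W'. w > j")
    case True
    define v where "v = Min {w\<in>W'. w > j}"
    have "v \<in> {w\<in>W'. w > j}" unfolding v_def using True fW' by (intro Min_in) auto
    then have vin: "v \<in> W'" "v > j" by auto
    show ?thesis
    proof (rule that[OF vin(1)])
      fix u assume u: "u \<in> W'" "{v,u} \<in> cyc_ext k"
      have "u < k" "v < k" using u vin W W'_def by auto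
      have "\<not> v = (u+1) mod k"
      proof
        assume "v = (u+1) mod k"
        then have "v = u + 1" using vin \<open>u < k\<close> by (auto simp: mod_if split: if_splits)
        then have "u > j" using u W'_def vin by auto
        then have "v \<le> u" unfolding v_def using u fW' by (intro Min_le) auto
        then show False using \<open>v = u+1\<close> by simp
      qed
      then show "u = (v+1) mod k" using u cyc_ext_iff[OF k0] by blast
    qed
  next
    case False
    define v where "v = Min W'"
    have vin: "v \<in> W'" unfolding v_def using W'ne fW' by auto
    show ?thesis
    proof (rule that[OF vin])
      fix u assume u: "u \<in> W'" "{v,u} \<in> cyc_ext k"
      have "\<not> u > j" using u False by blast
      moreover have "u \<noteq> j" using u W'_def by blast
      ultimately have "u < j" by linarith
      have "\<not> v = (u+1) mod k"
      proof
        assume "v = (u+1) mod k"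
        moreover have "u + 1 < k" using \<open>u < j\<close> j by linarith
        ultimately have "v = u + 1" by simp
        moreover have "v \<le> u" unfolding v_def using u fW' by (intro Min_le)
        ultimately show False by simp
      qed
      then show "u = (v+1) mod k" using u cyc_ext_iff[OF k0] by blast
    qed
  qed
  have vW: "v \<in> W" "v \<noteq> j" "v < k" using v W W'_def by auto
  have nb: "\<And>u. u \<in> W \<Longrightarrow> u \<noteq> v \<Longrightarrow> {v,u} \<in> Fx k idx x \<Longrightarrow> u = j \<or> u = (v+1) mod k"
  proof -
    fix u assume u: "u \<in> W" "u \<noteq> v" "{v,u} \<in> Fx k idx x"
    show "u = j \<or> u = (v+1) mod k"
    proof (cases "u = j")
      case False
      then have uW': "u \<in> W'" using u W'_def by simp
      from Fdest[OF u(3)] consider "{v,u} \<in> cyc_ext k" | e where "idx e = {v,u}" "x $ e = 1" by blast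
      then show ?thesis
      proof cases
        case 1 then show ?thesis using key uW' by blast
      next
        case 2 then have "j \<in> {v,u}" using x by auto
        then show ?thesis using vW by auto
      qed
    qed simp
  qed
  show "\<exists>v\<in>W. \<forall>a\<in>W. \<forall>b\<in>W. a\<noteq>v \<longrightarrow> b\<noteq>v \<longrightarrow> a\<noteq>b \<longrightarrow> {v,a}\<in>Fx k idx x \<longrightarrow> {v,b}\<in>Fx k idx x \<longrightarrow> {a,b}\<in>Fx k idx x"
  proof (rule bexI[OF _ vW(1)], intro ballI impI)
    fix a b assume ab: "a \<in> W" "b \<in> W" "a \<noteq> v" "b \<noteq> v" "a \<noteq> b" "{v,a}\<in>Fx k idx x" "{v,b}\<in>Fx k idx x"
    have "a = j \<or> a = (v+1) mod k" "b = j \<or> b = (v+1) mod k" using nb ab by blast+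
    then have jab: "j \<in> {a,b}" using ab by auto
    have "a < k" "b < k" using ab W by auto
    moreover have "\<And>e. idx e = {a,b} \<Longrightarrow> x $ e = 1" using x jab by auto
    ultimately show "{a,b} \<in> Fx k idx x" using inF ab by blast
  qed
qed

end

context cycset begin

definition "R = {e. e \<noteq> ea \<and> e \<notin> S}"
definition "J = {j. j < k \<and> j \<noteq> i \<and> j \<noteq> p \<and> j \<noteq> n}"
definition ax :: "'e \<Rightarrow> real ^ 'e" where "ax e0 = (\<chi> e. if e = e0 then 1 else 0)"
definition one :: "real ^ 'e" where "one = (\<chi> e. 1)"
definition oe :: "'e \<Rightarrow> real ^ 'e" where "oe e0 = (\<chi> e. if e = e0 then 0 else 1)"
definition y0 :: "real ^ 'e" where "y0 = (\<chi> e. if e \<in> S then 0 else 1)"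
definition yr :: "'e \<Rightarrow> real ^ 'e" where "yr r = (\<chi> e. if e \<in> S \<or> e = r then 0 else 1)"
definition zf :: "nat \<Rightarrow> real ^ 'e" where "zf j = (\<chi> e. if j \<in> idx e then 1 else 0)"
definition cv :: "real ^ 'e" where "cv = (\<chi> e. (if e = ea then 1 else 0) + (if e \<in> S then 1 else 0))"

lemma inXG: "(\<forall>e. x$e = 0 \<or> x$e = 1) \<Longrightarrow> chordal {0..<k} (Fx k idx x) \<Longrightarrow> x \<in> XG k idx"
  unfolding XG_def Fx_def by simp

lemma one_XG: "one \<in> XG k idx"
  by (rule inXG) (auto simp: one_def intro!: chordal_full[of 0 0])

lemma oe_XG: "oe e0 \<in> XG k idx"
proof -
  obtain r1 r2 where r: "idx e0 = {r1,r2}" using cyc_Ec_elem[OF idx_Ec] by blast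
  show ?thesis
    by (rule inXG) (auto simp: oe_def r split: if_splits intro!: chordal_full[of r1 r2])
qed

lemma y0_XG: "y0 \<in> XG k idx"
  by (rule inXG) (auto simp: y0_def ea_notS intro!: chordal_y[of _ 0 0])

lemma yr_XG: assumes "r \<in> R" shows "yr r \<in> XG k idx"
proof -
  obtain r1 r2 where r: "idx r = {r1,r2}" using cyc_Ec_elem[OF idx_Ec] by blast
  have "\<And>e. idx e \<noteq> {r1,r2} \<Longrightarrow> e \<noteq> r" using r by auto
  then show ?thesis using assms
    by (intro inXG) (auto simp: yr_def R_def ea_notS r split: if_splits intro!: chordal_y[of _ r1 r2])
qed

lemma zf_XG: assumes "j < k" shows "zf j \<in> XG k idx"
  by (rule inXG) (auto simp: zf_def split: if_splits intro!: chordal_fan[OF assms])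

lemma lhs_y0: "ineq_lhs k idx i y0 = 1"
  by (simp add: lhs_eq y0_def ea_notS)

lemma lhs_yr: "r \<in> R \<Longrightarrow> ineq_lhs k idx i (yr r) = 1"
  by (auto simp: lhs_eq yr_def ea_notS R_def)

lemma S_pair: assumes "s \<in> S" obtains j where "j \<in> J" "idx s = {i,j}"
proof -
  obtain a b where ab: "idx s = {a,b}" "a < k" "b < k" "a \<noteq> b" using cyc_Ec_elem[OF idx_Ec] by blast
  have "i \<in> {a,b}" "{a,b} \<inter> {p,n} = {}" using assms ab unfolding S_def by auto
  then obtain j where j: "{a,b} = {i,j}" "j < k" "j \<noteq> i" using ab by auto
  then have "j \<in> J" using \<open>{a,b} \<inter> {p,n} = {}\<close> unfolding J_def by auto
  then show ?thesis using that j ab by auto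
qed

lemma J_pre: assumes "j \<in> J" obtains s where "s \<in> S" "idx s = {i,j}"
    "\<And>e. e \<in> S \<Longrightarrow> j \<in> idx e \<longleftrightarrow> e = s"
proof -
  have j: "j < k" "j \<noteq> i" "j \<noteq> p" "j \<noteq> n" using assms unfolding J_def by auto
  have "{i,j} \<notin> cyc_ext k" using pn(9) j by blast
  then have "{i,j} \<in> cyc_Ec k" using pair_cases[of i k j] ik j by auto
  then obtain s where s: "idx s = {i,j}" using Ec_pre by blast
  have sS: "s \<in> S" using s j pn unfolding S_def by auto
  have "\<And>e. e \<in> S \<Longrightarrow> j \<in> idx e \<longleftrightarrow> e = s"
  proof
    fix e assume e: "e \<in> S" "j \<in> idx e"
    obtain a b where ab: "idx e = {a,b}" "a \<noteq> b" using cyc_Ec_elem[OF idx_Ec] by blast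
    have "i \<in> idx e" using e unfolding S_def by auto
    then have "idx e = {i,j}" using ab e j by auto
    then show "e = s" using s inj_idx by metis
  next
    fix e assume "e = s" then show "j \<in> idx e" using s by simp
  qed
  then show ?thesis using that sS s by blast
qed

lemma lhs_zf: assumes "j \<in> J" shows "ineq_lhs k idx i (zf j) = 1"
proof -
  obtain s where s: "s \<in> S" "idx s = {i,j}" "\<And>e. e \<in> S \<Longrightarrow> j \<in> idx e \<longleftrightarrow> e = s"
    using J_pre[OF assms] by blast
  have "zf j $ ea = 0" using assms idx_ea unfolding zf_def J_def by auto
  moreover have "sum (\<lambda>e. zf j $ e) S = sum (\<lambda>e. if e = s then 1 else 0) S"
    by (rule sum.cong) (auto simp: zf_def s(3))
  moreover have "\<dots> = 1" using s(1) by simp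
  ultimately show ?thesis by (simp add: lhs_eq)
qed

lemma lhs_inner: "ineq_lhs k idx i x = cv \<bullet> x"
proof -
  have "cv \<bullet> x = (\<Sum>e\<in>UNIV. (if e = ea then x$e else 0) + (if e \<in> S then x$e else 0))"
    unfolding inner_vec_def cv_def by (intro sum.cong) auto
  also have "\<dots> = x$ea + sum (\<lambda>e. x$e) S"
    by (simp add: sum.distrib sum.If_cases)
  finally show ?thesis by (simp add: lhs_eq)
qed

lemma valid_X: "x \<in> XG k idx \<Longrightarrow> ineq_lhs k idx i x \<ge> 1"
proof -
  assume x: "x \<in> XG k idx"
  have nn: "\<And>e. x$e \<ge> 0" using x unfolding XG_def by (metis (mono_tags, lifting) mem_Collect_eq order_refl zero_le_one)
  have sn: "sum (\<lambda>e. x$e) S \<ge> 0" using nn by (simp add: sum_nonneg)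
  from valid01[OF x] show ?thesis
  proof
    assume "x $ ea = 1" then show ?thesis using sn by (simp add: lhs_eq)
  next
    assume "\<exists>s\<in>S. x $ s = 1"
    then obtain s where s: "s \<in> S" "x$s = 1" by blast
    have "x$s \<le> sum (\<lambda>e. x$e) S" using s nn by (intro member_le_sum) auto
    then show ?thesis using s nn[of ea] by (simp add: lhs_eq)
  qed
qed

end

context cycset begin

lemma ax_sum_comp: "(\<Sum>r\<in>A. f r *\<^sub>R ax r) $ e' = (if e' \<in> A then f e' else 0)"
proof -
  have "(\<Sum>r\<in>A. f r *\<^sub>R ax r) $ e' = (\<Sum>r\<in>A. if r = e' then f r else 0)"
    unfolding sum_component by (intro sum.cong) (auto simp: ax_def)
  also have "\<dots> = (if e' \<in> A then f e' else 0)"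
    using sum.delta'[of A e' f] by (simp add: eq_commute)
  finally show ?thesis .
qed

lemma decomp: "v = (\<Sum>e\<in>UNIV. (v$e) *\<^sub>R ax e)"
  unfolding vec_eq_iff ax_sum_comp by simp

lemma affine_full: "affine hull (XG k idx) = UNIV"
proof -
  define T where "T = (\<lambda>x. -one + x) ` XG k idx"
  have h: "affine hull (XG k idx) = (\<lambda>x. one + x) ` span T"
    unfolding T_def by (rule affine_hull_span_gen) (rule hull_inc[OF one_XG])
  have ax: "ax e \<in> span T" for e
  proof -
    have "-one + oe e = - ax e" by (simp add: vec_eq_iff one_def oe_def ax_def)
    then have "- ax e \<in> span T" unfolding T_def using oe_XG by (metis image_eqI span_base)
    then show ?thesis using span_neg by fastforce
  qed
  have "v \<in> span T" for v
    by (subst decomp) (intro span_sum span_scale ax)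
  then have "y \<in> affine hull (XG k idx)" for y
    unfolding h by (intro image_eqI[of _ _ "-one + y"]) auto
  then show ?thesis by auto
qed

definition "P = insert y0 (yr ` R \<union> zf ` J)"

lemma P_sub: "P \<subseteq> XG k idx \<inter> {x. ineq_lhs k idx i x = 1}"
  unfolding P_def using y0_XG yr_XG zf_XG lhs_y0 lhs_yr lhs_zf J_def by auto

lemma affine_face: "{x. cv \<bullet> x = 1} \<subseteq> affine hull P"
proof
  fix y assume y: "y \<in> {x. cv \<bullet> x = 1}"
  define T where "T = (\<lambda>x. -y0 + x) ` P"
  have h: "affine hull P = (\<lambda>x. y0 + x) ` span T"
    unfolding T_def by (rule affine_hull_span_gen) (rule hull_inc, simp add: P_def)
  have axR: "ax r \<in> span T" if r: "r \<in> R" for r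
  proof -
    have "-y0 + yr r = - ax r" using r by (auto simp: vec_eq_iff y0_def yr_def ax_def R_def)
    then have "- ax r \<in> span T" unfolding T_def P_def using r by (metis UnI1 image_eqI insertI2 span_base)
    then show ?thesis using span_neg by fastforce
  qed
  have axS: "ax s - ax ea \<in> span T" if s: "s \<in> S" for s
  proof -
    obtain j where j: "j \<in> J" "idx s = {i,j}" using S_pair[OF s] by blast
    obtain s' where s': "s' \<in> S" "idx s' = {i,j}" "\<And>e. e \<in> S \<Longrightarrow> j \<in> idx e \<longleftrightarrow> e = s'"
      using J_pre[OF j(1)] by blast
    have ss: "s' = s" using s' j inj_idx by metis
    have zea: "zf j $ ea = 0" using j idx_ea unfolding zf_def J_def by auto
    define d where "d = -y0 + zf j"
    have dT: "d \<in> span T" unfolding d_def T_def P_def using j by (metis UnI2 image_eqI insertI2 span_base)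
    have eq: "ax s - ax ea = d + (\<Sum>r\<in>R. (1 - zf j $ r) *\<^sub>R ax r)"
    proof (subst vec_eq_iff, intro allI)
      fix e'
      have sc: "(\<Sum>r\<in>R. (1 - zf j $ r) *\<^sub>R ax r) $ e' = (if e' \<in> R then 1 - zf j $ e' else 0)"
        by (rule ax_sum_comp)
      consider "e' = ea" | "e' \<in> S" | "e' \<in> R" unfolding R_def by blast
      then show "(ax s - ax ea) $ e' = (d + (\<Sum>r\<in>R. (1 - zf j $ r) *\<^sub>R ax r)) $ e'"
      proof cases
        case 1 show ?thesis unfolding vector_add_component sc using 1 s ea_notS zea
          by (auto simp: d_def ax_def y0_def R_def)
      next
        case 2 show ?thesis unfolding vector_add_component sc using 2 s s'(3)[of e'] ss ea_notS
          by (auto simp: d_def ax_def y0_def R_def zf_def)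
      next
        case 3 show ?thesis unfolding vector_add_component sc using 3 s
          by (auto simp: d_def ax_def y0_def R_def)
      qed
    qed
    show ?thesis unfolding eq using dT axR
      by (intro span_add span_sum span_scale) auto
  qed
  define v where "v = y - y0"
  have cv0: "v$ea + sum (\<lambda>e. v$e) S = 0"
  proof -
    have "ineq_lhs k idx i y = 1" using y lhs_inner by simp
    then have "y$ea + sum (\<lambda>e. y$e) S = 1" by (simp add: lhs_eq)
    moreover have "y0$ea + sum (\<lambda>e. y0$e) S = 1" using lhs_y0 by (simp add: lhs_eq)
    ultimately show ?thesis unfolding v_def by (simp add: sum_subtractf)
  qed
  have veq: "v = (\<Sum>r\<in>R. v$r *\<^sub>R ax r) + (\<Sum>s\<in>S. v$s *\<^sub>R (ax s - ax ea))"
  proof (subst vec_eq_iff, intro allI)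
    fix e'
    have sc1: "(\<Sum>r\<in>R. v$r *\<^sub>R ax r) $ e' = (if e' \<in> R then v$e' else 0)"
      by (rule ax_sum_comp)
    have "(\<Sum>s\<in>S. v$s *\<^sub>R (ax s - ax ea)) = (\<Sum>s\<in>S. v$s *\<^sub>R ax s) - (sum (\<lambda>e. v$e) S) *\<^sub>R ax ea"
      by (simp add: scaleR_diff_right sum_subtractf scaleR_sum_left)
    moreover have "(\<Sum>s\<in>S. v$s *\<^sub>R ax s) $ e' = (if e' \<in> S then v$e' else 0)"
      by (rule ax_sum_comp)
    ultimately have sc2: "(\<Sum>s\<in>S. v$s *\<^sub>R (ax s - ax ea)) $ e' = (if e' \<in> S then v$e' else 0) - (if e' = ea then sum (\<lambda>e. v$e) S else 0)"
      by (simp add: ax_def)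
    consider "e' = ea" | "e' \<in> S" | "e' \<in> R" unfolding R_def by blast
    then show "v $ e' = ((\<Sum>r\<in>R. v$r *\<^sub>R ax r) + (\<Sum>s\<in>S. v$s *\<^sub>R (ax s - ax ea))) $ e'"
    proof cases
      case 1
      have "e' \<notin> R" "e' \<notin> S" using 1 ea_notS R_def by auto
      then show ?thesis unfolding vector_add_component sc1 sc2 using 1 cv0 by simp
    next
      case 2
      have "e' \<notin> R" "e' \<noteq> ea" using 2 ea_notS R_def by auto
      then show ?thesis unfolding vector_add_component sc1 sc2 using 2 by simp
    next
      case 3
      have "e' \<notin> S" "e' \<noteq> ea" using 3 R_def by auto
      then show ?thesis unfolding vector_add_component sc1 sc2 using 3 by simp
    qed
  qed
  have "v \<in> span T" using axR axS
    by (subst veq) (intro span_add span_sum span_scale, auto simp: R_def)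
  then show "y \<in> affine hull P"
    unfolding h v_def by (intro image_eqI[of _ _ "-y0 + y"]) auto
qed

end

theorem proposition3:
  fixes k i :: nat and idx :: "'e::finite \<Rightarrow> nat set"
  assumes "k \<ge> 4" and "bij_betw idx UNIV (cyc_Ec k)" and "i < k"
  shows "(\<forall>x \<in> convex hull (XG k idx). ineq_lhs k idx i x \<ge> 1) \<and>
         (convex hull (XG k idx) \<inter> {x. ineq_lhs k idx i x = 1}) face_of convex hull (XG k idx) \<and>
         aff_dim (convex hull (XG k idx) \<inter> {x. ineq_lhs k idx i x = 1})
           = aff_dim (convex hull (XG k idx)) - 1"
proof -
  interpret cycset k i idx using assms by unfold_locales
  have Heq: "{x. ineq_lhs k idx i x = 1} = {x. cv \<bullet> x = 1}" using lhs_inner by simp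
  have X1: "\<And>x. x \<in> XG k idx \<Longrightarrow> 1 \<le> cv \<bullet> x" using valid_X lhs_inner by metis
  have CX: "convex hull (XG k idx) \<subseteq> {x. 1 \<le> cv \<bullet> x}"
    by (rule hull_minimal) (use X1 convex_halfspace_ge in auto)
  have part1: "\<forall>x \<in> convex hull (XG k idx). ineq_lhs k idx i x \<ge> 1"
    using CX lhs_inner by auto
  have part2: "(convex hull (XG k idx) \<inter> {x. ineq_lhs k idx i x = 1}) face_of convex hull (XG k idx)"
    unfolding Heq by (rule face_of_Int_supporting_hyperplane_ge[OF convex_convex_hull]) (use CX in auto)
  have cv0: "cv \<noteq> 0"
  proof
    assume "cv = 0"
    then have "cv $ ea = 0" by simp
    then show False using ea_notS by (simp add: cv_def)
  qed
  have dimX: "aff_dim (convex hull (XG k idx)) = DIM(real ^ 'e)"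
    using affine_full aff_dim_eq_full aff_dim_convex_hull by metis
  have dimH: "aff_dim {x. cv \<bullet> x = 1} = DIM(real ^ 'e) - 1"
    using cv0 by simp
  have Psub: "P \<subseteq> convex hull (XG k idx) \<inter> {x. cv \<bullet> x = 1}"
    using P_sub Heq hull_subset[of "XG k idx" convex] by blast
  have "aff_dim {x. cv \<bullet> x = 1} \<le> aff_dim (affine hull P)"
    by (rule aff_dim_subset[OF affine_face])
  also have "\<dots> = aff_dim P" by simp
  also have "\<dots> \<le> aff_dim (convex hull (XG k idx) \<inter> {x. cv \<bullet> x = 1})"
    by (rule aff_dim_subset[OF Psub])
  also have "\<dots> \<le> aff_dim {x. cv \<bullet> x = 1}"
    by (rule aff_dim_subset) auto
  finally have "aff_dim (convex hull (XG k idx) \<inter> {x. cv \<bullet> x = 1}) = DIM(real ^ 'e) - 1"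
    using dimH by (smt (verit) aff_dim_subset inf_le2)
  then have part3: "aff_dim (convex hull (XG k idx) \<inter> {x. ineq_lhs k idx i x = 1})
           = aff_dim (convex hull (XG k idx)) - 1"
    using dimX Heq by simp
  show ?thesis using part1 part2 part3 by blast
qed

end
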